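(* Let $d\ge 2$, let $\mathbf f_t(z)=\frac{z^d+t}{z}\in\overline{\mathbb Q}(t)(z)$, and let $\mathbf c=\mathbf A/\mathbf B\in\overline{\mathbb Q}(t)$ with $\mathbf A,\mathbf B\in\overline{\mathbb Q}[t]$ coprime. If $\mathbf c(0)=0$, then $$\widehat h_{\mathbf f}(\mathbf c)=\frac{\deg(\mathbf f_t(\mathbf c(t)))}{d}=\frac{\deg(\mathbf f_t^2(\mathbf c(t)))}{d^2}.$$
   Context: For a rational function $g\in\overline{\mathbb Q}(t)$, $\deg(g)$ is the maximum of the degrees of numerator and denominator in lowest terms. $\widehat h_{\mathbf f}(\mathbf c)=\lim_{n\to\infty}\deg(\mathbf f_t^n(\mathbf c(t)))/d^n$, where $\mathbf f_t^n$ denotes the $n$-th iterate of $z\mapsto\mathbf f_t(z)$. The condition $\mathbf c(0)=0$ means $\mathbf A(0)=0$. *)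

theory Defs
  imports "HOL-Analysis.Analysis" "HOL-Computational_Algebra.Computational_Algebra" "HOL-Computational_Algebra.Field_as_Ring"
begin

text \<open>Rational functions in t over the complex numbers are elements of the fraction field
  of complex polynomials; the coefficients will be restricted to algebraic numbers.\<close>
type_synonym ratfun = "complex poly fract"

definition rdeg :: "ratfun \<Rightarrow> nat" where
  "rdeg g = (case quot_of_fract g of (p, q) \<Rightarrow> max (degree p) (degree q))"

definition tvar :: ratfun where
  "tvar = to_fract [:0, 1:]"

definition fmap :: "nat \<Rightarrow> ratfun \<Rightarrow> ratfun" where
  "fmap d z = (z ^ d + tvar) / z"

definition canonical_height :: "nat \<Rightarrow> ratfun \<Rightarrow> real" where
  "canonical_height d c = lim (\<lambda>n. real (rdeg ((fmap d ^^ n) c)) / real d ^ n)"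

end

theory Submission
  imports Defs
begin

lemma deg_unit_mult:
  fixes u p :: "complex poly"
  assumes "is_unit u"
  shows "degree (u * p) = degree p"
  using assms by (auto simp: is_unit_poly_iff)

lemma rdeg_coprime:
  fixes P Q :: "complex poly"
  assumes "coprime P Q" "Q \<noteq> 0"
  shows "rdeg (to_fract P / to_fract Q) = max (degree P) (degree Q)"
proof -
  have g: "gcd P Q = 1" using assms(1) by simp
  have e: "to_fract P / to_fract Q = quot_to_fract (P, Q)"
    by (simp add: quot_to_fract_def Fract_conv_to_fract)
  have u: "is_unit (unit_factor Q)" using assms(2) by simp
  have "quot_of_fract (to_fract P / to_fract Q) = (P div unit_factor Q, normalize Q)"
    unfolding e quot_of_fract_quot_to_fract using assms(2) g
    by (simp add: normalize_quot_def Let_def)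
  moreover have "degree (P div unit_factor Q) = degree P"
  proof -
    have "P = unit_factor Q * (P div unit_factor Q)" using u by (metis dvd_mult_div_cancel unit_imp_dvd)
    thus ?thesis using deg_unit_mult[OF u, of "P div unit_factor Q"] by simp
  qed
  moreover have "degree (normalize Q) = degree Q"
    using deg_unit_mult[OF u, of "normalize Q"] by simp
  ultimately show ?thesis by (simp add: rdeg_def)
qed


lemma coprime_add_mul:
  fixes a b k :: "complex poly"
  assumes "coprime a b"
  shows "coprime (a + b * k) b"
proof (rule coprimeI)
  fix c assume c1: "c dvd a + b * k" and c2: "c dvd b"
  have "c dvd b * k" using c2 by simp
  hence "c dvd a" using c1 by (metis dvd_add_left_iff)
  thus "is_unit c" using c2 assms coprime_common_divisor by blast
qed

lemma to_fract_power: "to_fract (x ^ n) = to_fract x ^ n"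
  by (induction n) auto

definition tp :: "complex poly" where "tp = [:0, 1:]"

lemma tvar_tp: "tvar = to_fract tp"
  by (simp add: tvar_def tp_def)

lemma degree_tp [simp]: "degree tp = 1" by (simp add: tp_def)
lemma tp_nz [simp]: "tp \<noteq> 0" by (simp add: tp_def)
lemma poly_tp [simp]: "poly tp x = x" by (simp add: tp_def)

lemma tp_dvd_iff: "tp dvd p \<longleftrightarrow> poly p 0 = 0"
  using poly_eq_0_iff_dvd[of p 0] by (simp add: tp_def)

lemma prime_tp: "prime_elem tp"
  unfolding tp_def by (rule prime_elem_linear_field_poly) simp

lemma coprime_tp: "poly p 0 \<noteq> 0 \<Longrightarrow> coprime tp p"
  by (rule prime_elem_imp_coprime[OF prime_tp]) (simp add: tp_dvd_iff)

lemma fmap_step: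
  fixes P Q :: "complex poly"
  assumes "P \<noteq> 0" "Q \<noteq> 0"
  shows "fmap (Suc m) (to_fract P / to_fract Q)
         = to_fract (P ^ Suc m + tp * Q ^ Suc m) / to_fract (P * Q ^ m)"
proof -
  have p: "to_fract P \<noteq> 0" and q: "to_fract Q \<noteq> 0" using assms by auto
  show ?thesis
    unfolding fmap_def tvar_tp using p q
    by (simp add: to_fract_power field_simps)
qed

definition Inv :: "complex poly \<Rightarrow> complex poly \<Rightarrow> bool" where
  "Inv P Q \<longleftrightarrow> coprime P Q \<and> Q \<noteq> 0 \<and> poly P 0 \<noteq> 0 \<and> degree Q < degree P"

lemma step_inv:
  fixes P Q :: "complex poly"
  assumes "m \<ge> 1" "Inv P Q"
  shows "Inv (P ^ Suc m + tp * Q ^ Suc m) (P * Q ^ m)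
        \<and> degree (P ^ Suc m + tp * Q ^ Suc m) = Suc m * degree P"
proof -
  from assms(2) have cop: "coprime P Q" and Qnz: "Q \<noteq> 0" and P0: "poly P 0 \<noteq> 0"
    and dlt: "degree Q < degree P" unfolding Inv_def by auto
  have Pnz: "P \<noteq> 0" using P0 by auto
  have dP: "degree (P ^ Suc m) = Suc m * degree P" by (simp add: degree_power_eq Pnz del: power_Suc)
  have dT: "degree (tp * Q ^ Suc m) = 1 + Suc m * degree Q"
    by (simp add: degree_mult_eq degree_power_eq Qnz)
  have "1 + Suc m * degree Q < Suc m * degree P"
  proof -
    have "Suc m * (degree Q + 1) \<le> Suc m * degree P" using dlt by (metis Suc_eq_plus1 Suc_leI mult_le_mono2)
    thus ?thesis using assms(1) by simp
  qed
  hence deg: "degree (P ^ Suc m + tp * Q ^ Suc m) = Suc m * degree P"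
    using dP dT by (simp add: degree_add_eq_left)
  have dQ': "degree (P * Q ^ m) = degree P + m * degree Q"
    by (simp add: degree_mult_eq degree_power_eq Qnz Pnz)
  have "degree P + m * degree Q < Suc m * degree P"
    using dlt assms(1) by (simp add: mult_strict_left_mono)
  hence dlt': "degree (P * Q ^ m) < degree (P ^ Suc m + tp * Q ^ Suc m)"
    using deg dQ' by simp
  have c1: "coprime (P ^ Suc m + tp * Q ^ Suc m) P"
  proof -
    have "coprime (tp * Q ^ Suc m) P"
      using coprime_tp[OF P0] cop by (simp add: coprime_commute)
    from coprime_add_mul[OF this, of "P ^ m"]
    show ?thesis by (simp add: algebra_simps)
  qed
  have c2: "coprime (P ^ Suc m + tp * Q ^ Suc m) (Q ^ m)"
  proof -
    have "coprime (P ^ Suc m) Q" using cop by simp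
    from coprime_add_mul[OF this, of "tp * Q ^ m"]
    have "coprime (P ^ Suc m + tp * Q ^ Suc m) Q" by (simp add: algebra_simps)
    thus ?thesis by simp
  qed
  have "poly (P ^ Suc m + tp * Q ^ Suc m) 0 \<noteq> 0" using P0 by simp
  moreover have "P * Q ^ m \<noteq> 0" using Pnz Qnz by simp
  ultimately show ?thesis using c1 c2 dlt' deg unfolding Inv_def by simp
qed

theorem proposition3p3:
  fixes d :: nat and A B :: "complex poly"
  assumes "d \<ge> 2"
    and "\<forall>i. algebraic (coeff A i)" and "\<forall>i. algebraic (coeff B i)"
    and "B \<noteq> 0" and "coprime A B"
    and "poly A 0 = 0"
  shows "((\<lambda>n. real (rdeg ((fmap d ^^ n) (to_fract A / to_fract B))) / real d ^ n)
            \<longlonglongrightarrow> real (rdeg (fmap d (to_fract A / to_fract B))) / real d)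
    \<and> canonical_height d (to_fract A / to_fract B)
            = real (rdeg (fmap d (to_fract A / to_fract B))) / real d
    \<and> real (rdeg (fmap d (to_fract A / to_fract B))) / real d
            = real (rdeg ((fmap d ^^ 2) (to_fract A / to_fract B))) / real d ^ 2"
proof -
  obtain m where dm: "d = Suc m" and m1: "m \<ge> 1" using assms(1)
    by (cases d) auto
  define c where "c = to_fract A / to_fract B"
  have dpos: "real d > 0" using assms(1) by simp
  show ?thesis
  proof (cases "A = 0")
    case True
    have c0: "c = 0" using True by (simp add: c_def)
    have f0: "fmap d 0 = 0" by (simp add: fmap_def)
    have it: "(fmap d ^^ n) 0 = 0" for n by (induction n) (auto simp: f0)
    have r0: "rdeg 0 = 0" by (simp add: rdeg_def)
    have seq: "(\<lambda>n. real (rdeg ((fmap d ^^ n) c)) / real d ^ n) = (\<lambda>n. 0)"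
      by (simp add: c0 it r0)
    have l: "(\<lambda>n. real (rdeg ((fmap d ^^ n) c)) / real d ^ n) \<longlonglongrightarrow> 0"
      unfolding seq by simp
    show ?thesis unfolding c_def[symmetric] using l limI[OF l]
      by (simp add: canonical_height_def c0 f0 it r0)
  next
    case False
    obtain A1 where A: "A = tp * A1" using assms(6) tp_dvd_iff by blast
    have A1nz: "A1 \<noteq> 0" using False A by auto
    have ctB: "coprime tp B" and cA1B: "coprime A1 B" using assms(5) A by auto
    have B0: "poly B 0 \<noteq> 0"
    proof
      assume "poly B 0 = 0"
      hence "tp dvd B" by (simp add: tp_dvd_iff)
      hence "is_unit tp" using ctB by (meson coprime_common_divisor dvd_refl)
      thus False using prime_tp by (simp add: prime_elem_def)
    qed
    define N1 where "N1 = tp ^ m * A1 ^ Suc m + B ^ Suc m"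
    define D1 where "D1 = A1 * B ^ m"
    have fc: "fmap d c = to_fract N1 / to_fract D1"
    proof -
      have "fmap d c = to_fract (A ^ Suc m + tp * B ^ Suc m) / to_fract (A * B ^ m)"
        unfolding c_def dm using fmap_step False assms(4) by blast
      also have "A ^ Suc m + tp * B ^ Suc m = tp * N1"
        unfolding A N1_def by (simp add: power_mult_distrib algebra_simps)
      also have "A * B ^ m = tp * D1" unfolding A D1_def by simp
      finally show ?thesis by simp
    qed
    have I1: "Inv N1 D1"
    proof -
      have c1: "coprime N1 A1"
      proof -
        have "coprime (B ^ Suc m) A1" using cA1B by (simp add: coprime_commute)
        from coprime_add_mul[OF this, of "tp ^ m * A1 ^ m"]
        show ?thesis unfolding N1_def by (simp add: algebra_simps)
      qed
      have c2: "coprime N1 (B ^ m)"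
      proof -
        have "coprime (tp ^ m * A1 ^ Suc m) B" using cA1B ctB by simp
        from coprime_add_mul[OF this, of "B ^ m"]
        have "coprime N1 B" unfolding N1_def by (simp add: algebra_simps)
        thus ?thesis by simp
      qed
      have p0: "poly N1 0 \<noteq> 0" using B0 m1 by (simp add: N1_def zero_power)
      have dnz: "D1 \<noteq> 0" using A1nz assms(4) by (simp add: D1_def)
      have dX: "degree (tp ^ m * A1 ^ Suc m) = m + Suc m * degree A1"
        by (simp add: degree_mult_eq degree_power_eq A1nz del: power_Suc)
      have dY: "degree (B ^ Suc m) = Suc m * degree B"
        by (simp add: degree_power_eq assms(4) del: power_Suc)
      have dD: "degree D1 = degree A1 + m * degree B"
        by (simp add: D1_def degree_mult_eq degree_power_eq A1nz assms(4))
      have "degree D1 < degree N1"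
      proof (cases "degree B \<le> degree A1")
        case True
        have "Suc m * degree B < m + Suc m * degree A1"
          using mult_le_mono2[OF True, of "Suc m"] m1 by linarith
        hence "degree N1 = m + Suc m * degree A1"
          unfolding N1_def using dX dY by (simp add: degree_add_eq_left)
        moreover have "degree A1 + m * degree B \<le> Suc m * degree A1"
          using True by simp
        ultimately show ?thesis using dD m1 mult_le_mono2[OF True, of m] by linarith
      next
        case False
        have "Suc m * (degree A1 + 1) \<le> Suc m * degree B"
          using False by (metis Suc_eq_plus1 Suc_leI mult_le_mono2 not_le)
        hence lt: "m + Suc m * degree A1 < Suc m * degree B" by simp
        hence "degree N1 = Suc m * degree B"
          unfolding N1_def using dX dY by (simp add: degree_add_eq_right)
        thus ?thesis using dD False by simp
      qed
      thus ?thesis unfolding Inv_def using c1 c2 p0 dnz by (simp add: D1_def)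
    qed
    define stepf where "stepf = (\<lambda>(P::complex poly, Q::complex poly). (P ^ Suc m + tp * Q ^ Suc m, P * Q ^ m))"
    define S where "S n = (stepf ^^ n) (N1, D1)" for n
    have key: "Inv (fst (S n)) (snd (S n)) \<and> degree (fst (S n)) = d ^ n * degree N1
       \<and> (fmap d ^^ Suc n) c = to_fract (fst (S n)) / to_fract (snd (S n))" for n
    proof (induction n)
      case 0 show ?case using I1 fc by (simp add: S_def)
    next
      case (Suc n)
      obtain P Q where PQ: "S n = (P, Q)" by fastforce
      have SS: "S (Suc n) = (P ^ Suc m + tp * Q ^ Suc m, P * Q ^ m)"
        using PQ by (simp add: S_def stepf_def)
      have IP: "Inv P Q" and dgP: "degree P = d ^ n * degree N1"
        and fP: "(fmap d ^^ Suc n) c = to_fract P / to_fract Q" using Suc PQ by auto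
      have nz: "P \<noteq> 0" "Q \<noteq> 0" using IP unfolding Inv_def by auto
      have "(fmap d ^^ Suc (Suc n)) c = fmap d ((fmap d ^^ Suc n) c)" by simp
      also have "\<dots> = to_fract (P ^ Suc m + tp * Q ^ Suc m) / to_fract (P * Q ^ m)"
        using fP fmap_step[OF nz, of m] dm by simp
      finally show ?case using step_inv[OF m1 IP] SS dgP dm by (simp add: algebra_simps)
    qed
    have rd: "rdeg ((fmap d ^^ Suc n) c) = d ^ n * degree N1" for n
    proof -
      have I: "Inv (fst (S n)) (snd (S n))" using key by blast
      hence "rdeg ((fmap d ^^ Suc n) c) = max (degree (fst (S n))) (degree (snd (S n)))"
        using key rdeg_coprime unfolding Inv_def by metis
      also have "\<dots> = degree (fst (S n))" using I unfolding Inv_def by simp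
      finally show ?thesis using key by simp
    qed
    have r1: "rdeg (fmap d c) = degree N1" using rd[of 0] by simp
    have r2: "rdeg ((fmap d ^^ 2) c) = d * degree N1" using rd[of 1] by (simp add: numeral_2_eq_2)
    have sh: "(\<lambda>n. real (rdeg ((fmap d ^^ Suc n) c)) / real d ^ Suc n) = (\<lambda>n. real (degree N1) / real d)"
    proof
      fix n
      have "real (rdeg ((fmap d ^^ Suc n) c)) / real d ^ Suc n
          = (real d ^ n * real (degree N1)) / (real d ^ n * real d)" unfolding rd by simp
      also have "\<dots> = real (degree N1) / real d" using dpos by simp
      finally show "real (rdeg ((fmap d ^^ Suc n) c)) / real d ^ Suc n = real (degree N1) / real d" .
    qed
    have l: "(\<lambda>n. real (rdeg ((fmap d ^^ n) c)) / real d ^ n) \<longlonglongrightarrow> real (degree N1) / real d"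
      by (rule LIMSEQ_imp_Suc) (simp only: sh tendsto_const)
    have e3: "real (degree N1) / real d = real (d * degree N1) / real d ^ 2"
      using dpos by (simp add: power2_eq_square)
    show ?thesis unfolding c_def[symmetric] using l limI[OF l] r1 r2 e3
      by (simp add: canonical_height_def)
  qed
qed

end
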